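(* Let $K$ be any field, let $u(x,y)\in K[x,y]\setminus K$, and let $\rho=(\alpha x+p(y),\beta y+\gamma)$ be a nonaffine triangular automorphism of $K[x,y]$, where $\alpha,\beta\in K\setminus\{0\}$, $\gamma\in K$ and $p(y)\in K[y]$ has degree at least $2$. Let $\tau=(y,x)$, so that $\tau\rho u=u(\alpha y+p(x),\beta x+\gamma)$. Then each of the following statements implies the next: (i) $u$ is biased; (ii) $\deg u<\deg(\tau\rho u)$; (iii) $\deg u\le\deg(\tau\rho u)$; (iv) $\tau\rho u$ is biased.
   Context: An automorphism $\varphi=(f,g)$ of $K[x,y]$ means $\varphi x=f$, $\varphi y=g$, and $\varphi u=u(f,g)$; composition is $(c,d)(a,b)=(a(c,d),b(c,d))$. $\deg$ denotes total degree. For $0\ne u\in K[x,y]$, $|u|$ denotes the homogeneous component of $u$ of maximal total degree, and $u$ is called biased if $\deg_x|u|\ge\deg_y|u|$, where $\deg_x,\deg_y$ are the degrees in $x$ and in $y$. *)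

theory Defs
  imports "HOL-Computational_Algebra.Polynomial"
begin

text \<open>K[x,y] is represented as ('a poly) poly: polynomials in y whose coefficients
are polynomials in x. The coefficient of x^i y^j in u is coeff (coeff u j) i.\<close>

definition varX :: "'a::comm_ring_1 poly poly" where
  "varX = [:[:0, 1:]:]"

definition varY :: "'a::comm_ring_1 poly poly" where
  "varY = [:0, 1:]"

definition const2 :: "'a::comm_ring_1 \<Rightarrow> 'a poly poly" where
  "const2 c = [:[:c:]:]"

definition eval2 :: "'a::comm_ring_1 poly poly \<Rightarrow> 'a poly poly \<Rightarrow> 'a poly poly \<Rightarrow> 'a poly poly" where
  "eval2 u f g = poly (map_poly (\<lambda>c. poly (map_poly const2 c) f) u) g"

definition aut_apply :: "('a::comm_ring_1 poly poly \<times> 'a poly poly) \<Rightarrow> 'a poly poly \<Rightarrow> 'a poly poly" where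
  "aut_apply \<phi> u = eval2 u (fst \<phi>) (snd \<phi>)"

text \<open>Composition (c,d)(a,b) = (a(c,d), b(c,d)).\<close>
definition aut_comp :: "('a::comm_ring_1 poly poly \<times> 'a poly poly) \<Rightarrow> ('a poly poly \<times> 'a poly poly) \<Rightarrow> ('a poly poly \<times> 'a poly poly)" where
  "aut_comp \<psi> \<phi> = (eval2 (fst \<phi>) (fst \<psi>) (snd \<psi>), eval2 (snd \<phi>) (fst \<psi>) (snd \<psi>))"

definition supp2 :: "'a::zero poly poly \<Rightarrow> (nat \<times> nat) set" where
  "supp2 u = {(i, j). coeff (coeff u j) i \<noteq> 0}"

text \<open>Total degree (for u \<noteq> 0).\<close>
definition tdeg :: "'a::zero poly poly \<Rightarrow> nat" where
  "tdeg u = Max ((\<lambda>(i, j). i + j) ` supp2 u)"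

definition degx_top :: "'a::zero poly poly \<Rightarrow> nat" where
  "degx_top u = Max {i. \<exists>j. (i, j) \<in> supp2 u \<and> i + j = tdeg u}"

definition degy_top :: "'a::zero poly poly \<Rightarrow> nat" where
  "degy_top u = Max {j. \<exists>i. (i, j) \<in> supp2 u \<and> i + j = tdeg u}"

definition biased :: "'a::zero poly poly \<Rightarrow> bool" where
  "biased u \<longleftrightarrow> degx_top u \<ge> degy_top u"

end

theory Submission
  imports Defs
begin


lemma finite_supp2: "finite (supp2 (w::'a::zero poly poly))"
proof -
  have "supp2 w \<subseteq> (\<Union>j\<in>{..degree w}. {..degree (coeff w j)} \<times> {j})"
  proof
    fix x assume "x \<in> supp2 w"
    then obtain i j where x: "x = (i,j)" "coeff (coeff w j) i \<noteq> 0" by (auto simp: supp2_def)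
    then have "coeff w j \<noteq> 0" by auto
    then have "j \<le> degree w" by (meson le_degree)
    moreover have "i \<le> degree (coeff w j)" using x(2) by (meson le_degree)
    ultimately show "x \<in> (\<Union>j\<in>{..degree w}. {..degree (coeff w j)} \<times> {j})" using x by auto
  qed
  moreover have "finite (\<Union>j\<in>{..degree w}. {..degree (coeff w j)} \<times> {j})" by auto
  ultimately show ?thesis by (rule finite_subset)
qed

lemma T1: "coeff (coeff w j) i \<noteq> 0 \<Longrightarrow> i + j \<le> tdeg (w::'a::zero poly poly)"
  unfolding tdeg_def
  by (rule Max_ge) (use finite_supp2[of w] in \<open>auto simp: supp2_def\<close>)

lemma T2: assumes "(w::'a::zero poly poly) \<noteq> 0"
  shows "\<exists>i j. coeff (coeff w j) i \<noteq> 0 \<and> i + j = tdeg w"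
proof -
  obtain j where "coeff w j \<noteq> 0" using assms by (meson leading_coeff_0_iff)
  then obtain i where "coeff (coeff w j) i \<noteq> 0" by (meson leading_coeff_0_iff)
  then have ne: "supp2 w \<noteq> {}" by (auto simp: supp2_def)
  have "tdeg w \<in> (\<lambda>(i, j). i + j) ` supp2 w" unfolding tdeg_def
    by (rule Max_in) (use ne finite_supp2 in auto)
  then show ?thesis by (auto simp: supp2_def) blast
qed

lemma T1': "coeff w j \<noteq> 0 \<Longrightarrow> degree (coeff w j) + j \<le> tdeg (w::'a::zero poly poly)"
  by (rule T1) simp

lemma map_poly_add_hom:
  assumes "\<And>x y. f (x + y) = f x + f y" "f 0 = 0"
  shows "map_poly f (A + B) = map_poly f A + map_poly f B"
  by (intro poly_eqI) (simp add: coeff_map_poly assms)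

lemma map_poly_mult_hom:
  fixes f :: "'a::comm_semiring_1 \<Rightarrow> 'b::comm_semiring_1"
  assumes "\<And>x y. f (x + y) = f x + f y" "\<And>x y. f (x * y) = f x * f y" "f 0 = 0"
  shows "map_poly f (A * B) = map_poly f A * map_poly f B"
proof (induction A)
  case 0 then show ?case by simp
next
  case (pCons a A)
  have "map_poly f (pCons a A * B) = map_poly f (smult a B + pCons 0 (A * B))" by simp
  also have "\<dots> = smult (f a) (map_poly f B) + pCons 0 (map_poly f A * map_poly f B)"
    by (simp add: map_poly_add_hom assms map_poly_smult map_poly_pCons pCons.IH)
  also have "\<dots> = map_poly f (pCons a A) * map_poly f B"
    by (simp add: map_poly_pCons assms)
  finally show ?case .
qed

lemma poly_map_pcompose:
  fixes f :: "'a::comm_semiring_1 \<Rightarrow> 'b::comm_semiring_1"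
  assumes "\<And>x y. f (x + y) = f x + f y" "\<And>x y. f (x * y) = f x * f y" "f 0 = 0"
  shows "poly (map_poly f (pcompose F P)) z = poly (map_poly f F) (poly (map_poly f P) z)"
proof (induction F)
  case 0 then show ?case by simp
next
  case (pCons a F)
  have "map_poly f (pcompose (pCons a F) P) = map_poly f [:a:] + map_poly f P * map_poly f (pcompose F P)"
    by (simp add: pcompose_pCons map_poly_add_hom map_poly_mult_hom assms)
  then show ?case using pCons.IH by (simp add: map_poly_pCons assms)
qed



definition embp :: "'a::comm_ring_1 poly \<Rightarrow> 'a poly poly" where
  "embp c = map_poly (\<lambda>a. [:a:]) c"

lemma embp_0[simp]: "embp 0 = 0" by (simp add: embp_def)
lemma embp_add: "embp (x + y) = embp x + embp y"
  unfolding embp_def by (rule map_poly_add_hom) auto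
lemma embp_mult: "embp (x * y) = embp x * embp y"
  unfolding embp_def by (rule map_poly_mult_hom) auto
lemma coeff_embp[simp]: "coeff (embp c) e = [:coeff c e:]"
  by (simp add: embp_def coeff_map_poly)
lemma embp_eq_0_iff[simp]: "embp c = 0 \<longleftrightarrow> c = 0"
proof
  assume "embp c = 0"
  then have "[:coeff c e:] = 0" for e by (metis coeff_embp coeff_0)
  then show "c = 0" by (intro poly_eqI) simp
qed simp
lemma degree_embp[simp]: "degree (embp c) = degree c"
  unfolding embp_def by (rule degree_map_poly) auto
lemma embp_const[simp]: "embp [:a:] = [:[:a:]:]"
  by (simp add: embp_def map_poly_pCons)

lemma lemX:
  "coeff (coeff (poly (map_poly embp w) (monom [:0,1:] d)) e) k =
     (if d*k \<le> e then coeff (coeff w k) (e - d*k) else 0)"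
proof (induction w arbitrary: e k)
  case 0 then show ?case by simp
next
  case (pCons a w)
  define Q where "Q = poly (map_poly embp w) (monom [:0,1:] d)"
  have eq: "poly (map_poly embp (pCons a w)) (monom [:0,1:] d) = embp a + monom [:0,1:] d * Q"
    by (simp add: map_poly_pCons Q_def)
  have c1: "coeff (monom [:0,1:] d * Q) e = (if e < d then 0 else pCons 0 (coeff Q (e - d)))"
    by (simp add: coeff_monom_mult)
  show ?case
  proof (cases k)
    case 0
    then show ?thesis unfolding eq by (simp add: c1)
  next
    case (Suc k')
    have IH: "coeff (coeff Q (e - d)) k' = (if d*k' \<le> e - d then coeff (coeff w k') (e - d - d*k') else 0)"
      unfolding Q_def by (rule pCons.IH)
    have L: "coeff (coeff (poly (map_poly embp (pCons a w)) (monom [:0,1:] d)) e) k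
        = (if e < d then 0 else coeff (coeff Q (e - d)) k')"
      unfolding eq by (simp add: c1 Suc)
    show ?thesis
    proof (cases "e < d")
      case True
      then have "\<not> d * k \<le> e" using Suc by simp
      then show ?thesis using L True by simp
    next
      case False
      have dk: "d*k = d + d*k'" using Suc by simp
      have e1: "(d*k' \<le> e - d) = (d * k \<le> e)" using False dk by linarith
      have e2: "e - d - d*k' = e - d * k" using dk by linarith
      have e3: "coeff (pCons a w) k = coeff w k'" using Suc by simp
      show ?thesis unfolding L e3 using False IH e1 e2 by simp
    qed
  qed
qed

lemma W2:
  fixes w :: "'a::field poly poly" and q :: "'a poly poly"
  assumes dq: "degree q = d" and lq: "lead_coeff q = C" and d0: "d > 0"
    and bnd: "\<And>i. coeff w i \<noteq> 0 \<Longrightarrow> d*i + degree (coeff w i) \<le> E"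
  shows "coeff (poly (map_poly embp w) q) E =
           (\<Sum>i\<le>degree w. [:(if d*i + degree (coeff w i) = E then lead_coeff (coeff w i) else 0):] * C^i)"
    and "E < e \<Longrightarrow> coeff (poly (map_poly embp w) q) e = 0"
proof -
  have q0: "q \<noteq> 0" using dq d0 by auto
  have dm: "degree (map_poly embp w) = degree w"
    by (rule degree_map_poly) simp
  have P: "poly (map_poly embp w) q = (\<Sum>i\<le>degree w. embp (coeff w i) * q^i)"
    by (simp add: poly_altdef dm coeff_map_poly)
  have trm: "coeff (embp (coeff w i) * q^i) e' = 0" if "E < e'" for i e'
  proof (cases "coeff w i = 0")
    case True then show ?thesis by simp
  next
    case False
    have "degree (embp (coeff w i) * q^i) = degree (coeff w i) + i*d"
      using False q0 by (simp add: degree_mult_eq degree_power_eq dq)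
    also have "\<dots> \<le> E" using bnd[OF False] by (simp add: mult.commute)
    finally show ?thesis using that by (intro coeff_eq_0) simp
  qed
  show "E < e \<Longrightarrow> coeff (poly (map_poly embp w) q) e = 0"
    unfolding P coeff_sum using trm by simp
  have termE: "coeff (embp (coeff w i) * q^i) E =
      [:(if d*i + degree (coeff w i) = E then lead_coeff (coeff w i) else 0):] * C^i" for i
  proof (cases "coeff w i = 0")
    case True then show ?thesis by simp
  next
    case False
    have dg: "degree (embp (coeff w i) * q^i) = degree (coeff w i) + i*d"
      using False q0 by (simp add: degree_mult_eq degree_power_eq dq)
    show ?thesis
    proof (cases "d*i + degree (coeff w i) = E")
      case True
      have eqE: "E = degree (embp (coeff w i)) + degree (q^i)"
        using True q0 by (simp add: degree_power_eq dq mult.commute)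
      have "coeff (embp (coeff w i) * q^i) E = lead_coeff (embp (coeff w i)) * lead_coeff (q^i)"
        unfolding eqE by (rule coeff_mult_degree_sum)
      then show ?thesis using True by (simp add: lead_coeff_power lq)
    next
      case False
      then have "degree (embp (coeff w i) * q^i) < E"
        using bnd[OF \<open>coeff w i \<noteq> 0\<close>] dg by (simp add: mult.commute)
      then show ?thesis using False by (simp add: coeff_eq_0)
    qed
  qed
  show "coeff (poly (map_poly embp w) q) E =
           (\<Sum>i\<le>degree w. [:(if d*i + degree (coeff w i) = E then lead_coeff (coeff w i) else 0):] * C^i)"
    unfolding P coeff_sum using termE by simp
qed

lemma pcompose_power_left: "pcompose (p ^ n) q = (pcompose p q) ^ n"
  by (induction n) (simp_all add: pcompose_1 pcompose_mult)

lemma pcompose_sumform: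
  "pcompose (\<Sum>i\<in>A. [:a i:] * [:0,1:]^i) C = (\<Sum>i\<in>A. [:a i:] * C^i)"
  by (simp add: pcompose_sum pcompose_mult pcompose_power_left pcompose_pCons pcompose_smult)

lemma coeff_order0: assumes "p \<noteq> 0" shows "coeff p (order 0 p) \<noteq> 0"
proof -
  obtain q where q: "p = [:-0,1:] ^ order 0 p * q" "\<not> [:-0,1:] dvd q"
    using order_decomp[OF assms] by blast
  have "poly q 0 \<noteq> 0" using q(2) by (simp add: dvd_iff_poly_eq_0)
  then have "coeff q 0 \<noteq> 0" by (simp add: poly_0_coeff_0)
  define m where "m = order 0 p"
  have "p = monom 1 m * q"
    using q(1) by (simp add: monom_altdef m_def)
  moreover have "coeff (monom 1 m * q) m = coeff q 0"
    by (simp add: coeff_monom_mult)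
  ultimately have "coeff p m = coeff q 0" by simp
  then show ?thesis using \<open>coeff q 0 \<noteq> 0\<close> m_def by simp
qed

lemma root_lemma:
  fixes L :: "'a::field poly"
  assumes L0: "L \<noteq> 0" and c0: "c \<noteq> 0" and al: "\<alpha> \<noteq> 0"
  shows "\<exists>k. coeff (pcompose L [:c,\<alpha>:]) k \<noteq> 0 \<and> k + order 0 L \<le> degree L"
proof -
  define m where "m = order 0 L"
  obtain R where R: "L = [:-0,1:] ^ m * R" "\<not> [:-0,1:] dvd R"
    using order_decomp[OF L0] m_def by blast
  have R0: "R \<noteq> 0" using R L0 by auto
  define R' where "R' = pcompose R [:c,\<alpha>:]"
  have dR': "degree R' = degree R" using al by (simp add: R'_def degree_pcompose)
  have R'0: "R' \<noteq> 0" using R0 al by (simp add: R'_def pcompose_eq_0_iff)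
  have Psi: "pcompose L [:c,\<alpha>:] = [:c,\<alpha>:]^m * R'"
    using R(1) by (simp add: R'_def pcompose_mult pcompose_power_left pcompose_pCons)
  have Q0: "[:c,\<alpha>:]^m \<noteq> 0" using c0 by simp
  have Psi0: "pcompose L [:c,\<alpha>:] \<noteq> 0" using Psi Q0 R'0 by simp
  have o1: "order 0 ([:c,\<alpha>:]^m) = 0"
    by (rule order_0I) (use c0 in simp)
  have "order 0 (pcompose L [:c,\<alpha>:]) = order 0 R'"
    using Psi Psi0 by (simp add: order_mult o1)
  also have "\<dots> \<le> degree R" using order_degree[OF R'0] dR' by simp
  finally have "order 0 (pcompose L [:c,\<alpha>:]) \<le> degree R" .
  moreover have "degree L = m + degree R"
    using R(1) R0 by (simp add: degree_mult_eq degree_linear_power)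
  ultimately show ?thesis using coeff_order0[OF Psi0] m_def by auto
qed



lemma core:
  fixes F :: "'a::field poly poly" and p :: "'a poly" and \<alpha> :: 'a
  assumes d2: "degree p \<ge> 2" and al: "\<alpha> \<noteq> 0" and Fa: "coeff F a \<noteq> 0"
    and top: "degree (coeff F a) + a = tdeg F" and bias: "tdeg F \<le> 2*a" and pos: "tdeg F \<ge> 1"
  shows "tdeg F < tdeg (pcompose F [:p, [:\<alpha>:]:])"
proof -
  define d where "d = degree p"
  define c where "c = lead_coeff p"
  define n where "n = tdeg F"
  define G where "G = pcompose F [:p, [:\<alpha>:]:]"
  define q1 :: "'a poly poly" where "q1 = monom [:0,1:] d"
  define PF where "PF = poly (map_poly embp F) q1"
  define PG where "PG = poly (map_poly embp G) q1"
  have d0: "d > 0" and dd: "d \<ge> 2" using d2 d_def by auto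
  have p0: "p \<noteq> 0" using d2 by auto
  have c0: "c \<noteq> 0" using p0 c_def by simp
  have XF: "coeff (coeff PF e) k = (if d*k \<le> e then coeff (coeff F k) (e - d*k) else 0)" for e k
    unfolding PF_def q1_def by (rule lemX)
  have XG: "coeff (coeff PG e) k = (if d*k \<le> e then coeff (coeff G k) (e - d*k) else 0)" for e k
    unfolding PG_def q1_def by (rule lemX)
  define H where "H = degree PF"
  have bnd: "d*i + degree (coeff F i) \<le> H" if "coeff F i \<noteq> 0" for i
  proof -
    have "coeff (coeff PF (d*i + degree (coeff F i))) i \<noteq> 0"
      using that by (simp add: XF)
    then have "coeff PF (d*i + degree (coeff F i)) \<noteq> 0" by auto
    then show ?thesis unfolding H_def by (rule le_degree)
  qed
  have PF0: "PF \<noteq> 0"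
  proof -
    have "coeff (coeff PF (d*a + degree (coeff F a))) a \<noteq> 0"
      using Fa by (simp add: XF)
    then show ?thesis by auto
  qed
  define q2 where "q2 = poly (map_poly embp [:p, [:\<alpha>:]:]) q1"
  have q2eq: "q2 = embp p + monom [:0,\<alpha>:] d"
    by (simp add: q2_def map_poly_pCons q1_def embp_def[symmetric] monom_altdef)
  have cq2: "coeff q2 d = [:c, \<alpha>:]"
    by (simp add: q2eq c_def d_def)
  have dq2: "degree q2 = d"
  proof (rule antisym)
    show "degree q2 \<le> d" unfolding q2eq
      by (rule degree_add_le) (auto simp: d_def degree_monom_le)
    show "d \<le> degree q2" using cq2 c0 by (intro le_degree) simp
  qed
  have lq2: "lead_coeff q2 = [:c, \<alpha>:]" using cq2 dq2 by simp
  have PGeq: "PG = poly (map_poly embp F) q2"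
    unfolding PG_def G_def q2_def
    by (rule poly_map_pcompose) (simp_all add: embp_add embp_mult)
  have dq1: "degree q1 = d" and lq1: "lead_coeff q1 = [:0,1:]"
    by (simp_all add: q1_def degree_monom_eq)
  define S where "S = (\<Sum>i\<le>degree F. [:(if d*i + degree (coeff F i) = H then lead_coeff (coeff F i) else 0):] * [:0,1:]^i)"
  have LamS: "coeff PF H = S"
    unfolding PF_def S_def by (rule W2(1)[OF dq1 lq1 d0]) (use bnd in auto)
  have PsiS: "coeff PG H = pcompose S [:c, \<alpha>:]"
    unfolding PGeq S_def pcompose_sumform by (rule W2(1)[OF dq2 lq2 d0]) (use bnd in auto)
  define Lam where "Lam = coeff PF H"
  have Lam0: "Lam \<noteq> 0" using PF0 by (simp add: Lam_def H_def)
  define Psi where "Psi = coeff PG H"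
  have Psieq: "Psi = pcompose Lam [:c,\<alpha>:]" using PsiS LamS Psi_def Lam_def by simp
  define m where "m = order 0 Lam"
  have "coeff Lam m \<noteq> 0" using coeff_order0[OF Lam0] m_def by simp
  then have m1: "d*m \<le> H" and m2: "coeff (coeff F m) (H - d*m) \<noteq> 0"
    using XF[of H m] Lam_def by (auto split: if_splits)
  have m3: "(H - d*m) + m \<le> n" using T1[OF m2] n_def by simp
  define I where "I = degree Lam"
  have "coeff Lam I \<noteq> 0" using Lam0 I_def by simp
  then have I1: "d*I \<le> H" using XF[of H I] Lam_def by (auto split: if_splits)
  obtain k where k1: "coeff Psi k \<noteq> 0" and k2: "k + m \<le> I"
    using root_lemma[OF Lam0 c0 al] Psieq m_def I_def by auto
  have k3: "d*k \<le> H" and k4: "coeff (coeff G k) (H - d*k) \<noteq> 0"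
    using k1 XG[of H k] Psi_def by (auto split: if_splits)
  have k5: "(H - d*k) + k \<le> tdeg G" using T1[OF k4] by simp
  have a1: "d*a + (n - a) \<le> H" using bnd[OF Fa] top n_def by simp
  have apos: "a \<ge> 1" using bias pos n_def by simp
  have an: "a \<le> n" using top n_def by simp
  have da: "d*a \<ge> 2*a" using dd by simp
  have ma: "a \<le> m"
  proof (rule ccontr)
    assume "\<not> a \<le> m"
    then have lt: "m < a" by simp
    have e1: "d*a = d*m + d*(a-m)" using lt by (simp add: diff_mult_distrib2)
    have e2: "d*(a-m) \<ge> 2*(a-m)" using dd by simp
    show False using e1 e2 lt m1 m3 a1 an by linarith
  qed
  have dm: "d*m \<ge> 2*m" using dd by simp
  show ?thesis
  proof (cases "k = 0")
    case True
    then have "H \<le> tdeg G" using k5 by simp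
    then have "n < tdeg G" using a1 da apos an by linarith
    then show ?thesis using n_def G_def by simp
  next
    case False
    have "d*(k+m) \<le> d*I" using k2 by simp
    then have "d*k + d*m \<le> H" using I1 by (simp add: add_mult_distrib2)
    then have "n < tdeg G" using k5 dm ma bias n_def False by linarith
    then show ?thesis using n_def G_def by simp
  qed
qed



lemma const2_add: "const2 (a + b) = const2 a + const2 b" by (simp add: const2_def)
lemma const2_mult: "const2 (a * b) = const2 a * const2 b" by (simp add: const2_def)
lemma const2_0[simp]: "const2 0 = 0" by (simp add: const2_def)
lemma const2_1[simp]: "const2 1 = 1" by (simp add: const2_def one_pCons)
lemma pc1[simp]: "[:1::'a::comm_semiring_1:] = 1" by (simp add: one_pCons)

lemma hf_add: "poly (map_poly const2 (a + b)) f = poly (map_poly const2 a) f + poly (map_poly const2 b) f"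
  by (simp add: map_poly_add_hom const2_add)
lemma hf_mult: "poly (map_poly const2 (a * b)) f = poly (map_poly const2 a) f * poly (map_poly const2 b) f"
  by (simp add: map_poly_mult_hom const2_add const2_mult)

lemma eval2_add: "eval2 (A + B) f g = eval2 A f g + eval2 B f g"
  unfolding eval2_def by (subst map_poly_add_hom) (simp_all add: hf_add)
lemma eval2_mult: "eval2 (A * B) f g = eval2 A f g * eval2 B f g"
  unfolding eval2_def by (subst map_poly_mult_hom) (simp_all add: hf_add hf_mult)
lemma eval2_const2: "eval2 (const2 a) f g = const2 a"
  by (simp add: eval2_def const2_def map_poly_pCons)
lemma eval2_varX: "eval2 varX f g = f"
  by (simp add: eval2_def varX_def map_poly_pCons const2_def)
lemma eval2_varY: "eval2 varY f g = g"
  by (simp add: eval2_def varY_def map_poly_pCons const2_def)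
lemma eval2_py: "eval2 (map_poly (\<lambda>a. [:a:]) p) f g = poly (map_poly const2 p) g"
  unfolding eval2_def by (subst map_poly_map_poly) (simp_all add: o_def map_poly_pCons const2_def[abs_def])
lemma poly_const2_const: "poly (map_poly const2 p) [:[:0,1:]:] = [:p:]"
  by (induction p) (simp_all add: map_poly_pCons const2_def)
lemma poly_const2_varX: "poly (map_poly const2 p) varX = [:p:]"
  unfolding varX_def by (rule poly_const2_const)

lemma comp_eq:
  fixes \<alpha> \<beta> \<gamma> :: "'a::field" and p :: "'a poly"
  shows "aut_comp (varY, varX) (const2 \<alpha> * varX + map_poly (\<lambda>a. [:a:]) p, const2 \<beta> * varY + const2 \<gamma>)
     = ([:p, [:\<alpha>:]:], [:[:\<gamma>, \<beta>:]:])"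
  by (simp add: aut_comp_def eval2_add eval2_mult eval2_const2 eval2_varX eval2_varY eval2_py
      poly_const2_varX) (simp add: varX_def varY_def const2_def)

definition tr :: "'a::comm_ring_1 poly poly \<Rightarrow> 'a poly poly" where
  "tr u = poly (map_poly (map_poly (\<lambda>a. [:a:])) u) [:[:0,1:]:]"

lemma pcomp_hom_add: "pcompose (x + y) q = pcompose x q + pcompose y q" by (rule pcompose_add)

lemma eval2_pcompose:
  fixes u :: "'a::field poly poly"
  shows "eval2 u f [:q:] = pcompose (map_poly (\<lambda>c. pcompose c q) (tr u)) f"
proof (induction u)
  case 0 then show ?case by (simp add: eval2_def tr_def)
next
  case (pCons a w)
  have L: "eval2 (pCons a w) f [:q:] = poly (map_poly const2 a) f + [:q:] * eval2 w f [:q:]"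
    by (simp add: eval2_def map_poly_pCons)
  have T: "tr (pCons a w) = map_poly (\<lambda>x. [:x:]) a + [:[:0,1:]:] * tr w"
    by (simp add: tr_def map_poly_pCons)
  have M: "map_poly (\<lambda>c. pcompose c q) (A + B) = map_poly (\<lambda>c. pcompose c q) A + map_poly (\<lambda>c. pcompose c q) B" for A B
    by (rule map_poly_add_hom) (simp_all add: pcompose_add)
  have M2: "map_poly (\<lambda>c. pcompose c q) (A * B) = map_poly (\<lambda>c. pcompose c q) A * map_poly (\<lambda>c. pcompose c q) B" for A B
    by (rule map_poly_mult_hom) (simp_all add: pcompose_add pcompose_mult)
  have M3: "map_poly (\<lambda>c. pcompose c q) (map_poly (\<lambda>x. [:x:]) a) = map_poly (\<lambda>x. [:x:]) a"
    by (subst map_poly_map_poly) (simp_all add: o_def)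
  have M4: "map_poly (\<lambda>c. pcompose c q) [:[:0,1:]:] = [:q:]"
    by (simp add: map_poly_pCons pcompose_pCons pcompose_1)
  have P1: "pcompose (map_poly (\<lambda>x. [:x:]) a) f = poly (map_poly const2 a) f"
    unfolding pcompose_altdef by (subst map_poly_map_poly) (simp_all add: o_def const2_def[abs_def])
  show ?case unfolding L T M M2 M3 M4 pcompose_add pcompose_mult P1 pCons.IH
    by simp
qed

lemma coeff_poly_const: "coeff (poly P [:z:]) i = poly (map_poly (\<lambda>c. coeff c i) P) z"
  by (induction P) (simp_all add: map_poly_pCons)

lemma coeff_tr: "coeff (coeff (tr u) i) j = coeff (coeff u j) i"
proof -
  have "coeff (tr u) i = poly (map_poly (\<lambda>c. coeff c i) (map_poly (map_poly (\<lambda>a. [:a:])) u)) [:0,1:]"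
    unfolding tr_def by (rule coeff_poly_const)
  also have "map_poly (\<lambda>c. coeff c i) (map_poly (map_poly (\<lambda>a. [:a:])) u)
      = map_poly (\<lambda>a. [:a:]) (map_poly (\<lambda>c. coeff c i) u)"
    by (simp add: map_poly_map_poly o_def coeff_map_poly)
  also have "poly \<dots> [:0,1:] = map_poly (\<lambda>c. coeff c i) u"
    using pcompose_altdef[symmetric] pcompose_idR by metis
  finally show ?thesis by (simp add: coeff_map_poly)
qed

lemma supp2_tr: "supp2 (tr u) = prod.swap ` supp2 u"
  by (auto simp: supp2_def coeff_tr image_iff)

lemma tdeg_tr: "tdeg (tr u) = tdeg u"
  unfolding tdeg_def supp2_tr image_image by (simp add: add.commute case_prod_beta)

lemma tdeg_rows_le:
  fixes A B :: "'a::zero poly poly"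
  assumes "\<And>j. coeff A j = 0 \<longleftrightarrow> coeff B j = 0" "\<And>j. degree (coeff A j) = degree (coeff B j)" "A \<noteq> 0"
  shows "tdeg A \<le> tdeg B"
proof -
  obtain i j where ij: "coeff (coeff A j) i \<noteq> 0" "i + j = tdeg A" using T2[OF assms(3)] by blast
  then have "coeff A j \<noteq> 0" by auto
  then have B: "coeff B j \<noteq> 0" using assms(1) by simp
  have "i \<le> degree (coeff A j)" using ij(1) by (rule le_degree)
  then show ?thesis using T1'[OF B] assms(2)[of j] ij(2) by simp
qed

lemma tdeg_rows:
  fixes A B :: "'a::zero poly poly"
  assumes "\<And>j. coeff A j = 0 \<longleftrightarrow> coeff B j = 0" "\<And>j. degree (coeff A j) = degree (coeff B j)" "A \<noteq> 0"
  shows "tdeg A = tdeg B"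
proof -
  have "B \<noteq> 0" using assms(1,3) by (metis coeff_0 leading_coeff_0_iff)
  then show ?thesis using tdeg_rows_le[OF assms] tdeg_rows_le[of B A] assms by (metis antisym)
qed

lemma fin_top: "finite {i. \<exists>j. (i, j) \<in> supp2 w \<and> i + j = tdeg w}"
  by (rule finite_subset[of _ "{..tdeg w}"]) auto
lemma fin_topy: "finite {j. \<exists>i. (i, j) \<in> supp2 w \<and> i + j = tdeg w}"
  by (rule finite_subset[of _ "{..tdeg w}"]) auto

lemma top_x:
  fixes w :: "'a::zero poly poly"
  assumes "w \<noteq> 0" shows "\<exists>j. coeff (coeff w j) (degx_top w) \<noteq> 0 \<and> degx_top w + j = tdeg w"
proof -
  obtain i j where "coeff (coeff w j) i \<noteq> 0" "i + j = tdeg w" using T2[OF assms] by blast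
  then have ne: "{i. \<exists>j. (i, j) \<in> supp2 w \<and> i + j = tdeg w} \<noteq> {}" by (auto simp: supp2_def)
  have "degx_top w \<in> {i. \<exists>j. (i, j) \<in> supp2 w \<and> i + j = tdeg w}"
    unfolding degx_top_def by (rule Max_in[OF fin_top ne])
  then show ?thesis by (auto simp: supp2_def)
qed

lemma top_y:
  fixes w :: "'a::zero poly poly"
  assumes "w \<noteq> 0" shows "\<exists>i. coeff (coeff w (degy_top w)) i \<noteq> 0 \<and> i + degy_top w = tdeg w"
proof -
  obtain i j where "coeff (coeff w j) i \<noteq> 0" "i + j = tdeg w" using T2[OF assms] by blast
  then have ne: "{j. \<exists>i. (i, j) \<in> supp2 w \<and> i + j = tdeg w} \<noteq> {}" by (auto simp: supp2_def)
  have "degy_top w \<in> {j. \<exists>i. (i, j) \<in> supp2 w \<and> i + j = tdeg w}"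
    unfolding degy_top_def by (rule Max_in[OF fin_topy ne])
  then show ?thesis by (auto simp: supp2_def)
qed

lemma le_degx:
  "coeff (coeff w j) i \<noteq> 0 \<Longrightarrow> i + j = tdeg w \<Longrightarrow> i \<le> degx_top (w::'a::zero poly poly)"
  unfolding degx_top_def by (rule Max_ge[OF fin_top]) (auto simp: supp2_def)

lemma le_degy:
  "coeff (coeff w j) i \<noteq> 0 \<Longrightarrow> i + j = tdeg w \<Longrightarrow> j \<le> degy_top (w::'a::zero poly poly)"
  unfolding degy_top_def by (rule Max_ge[OF fin_topy]) (auto simp: supp2_def)



theorem corollary4p2:
  fixes u :: "'a::field poly poly" and \<alpha> \<beta> \<gamma> :: 'a and p :: "'a poly"
  assumes "\<forall>c. u \<noteq> const2 c"
    and "\<alpha> \<noteq> 0" and "\<beta> \<noteq> 0" and "degree p \<ge> 2"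
  defines "\<rho> \<equiv> (const2 \<alpha> * varX + map_poly (\<lambda>a. [:a:]) p, const2 \<beta> * varY + const2 \<gamma>)"
    and "\<tau> \<equiv> (varY, varX)"
  defines "v \<equiv> aut_apply (aut_comp \<tau> \<rho>) u"
  shows "(biased u \<longrightarrow> tdeg u < tdeg v)
       \<and> (tdeg u < tdeg v \<longrightarrow> tdeg u \<le> tdeg v)
       \<and> (tdeg u \<le> tdeg v \<longrightarrow> biased v)"
proof -
  note nc = assms(1) and al = assms(2) and be = assms(3) and d2 = assms(4)
  define f0 where "f0 = [:p, [:\<alpha>:]:]"
  define q0 where "q0 = [:\<gamma>, \<beta>:]"
  have veq: "v = eval2 u f0 [:q0:]"
    using comp_eq[of \<alpha> p \<beta> \<gamma>] unfolding v_def \<rho>_def \<tau>_def aut_apply_def f0_def q0_def by simp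
  define R where "R = tr u"
  define Fu where "Fu = map_poly (\<lambda>c. pcompose c q0) R"
  have vF: "v = pcompose Fu f0" unfolding veq Fu_def R_def by (rule eval2_pcompose)
  have dq0: "degree q0 = 1" using be by (simp add: q0_def)
  have rowF: "coeff Fu j = pcompose (coeff R j) q0" for j
    by (simp add: Fu_def coeff_map_poly)
  have rows1: "coeff R j = 0 \<longleftrightarrow> coeff Fu j = 0" for j
    using dq0 by (simp add: rowF pcompose_eq_0_iff)
  have rows2: "degree (coeff R j) = degree (coeff Fu j)" for j
    using dq0 by (simp add: rowF degree_pcompose)
  have u0: "u \<noteq> 0" using nc[rule_format, of 0] by simp
  have upos: "tdeg u \<ge> 1"
  proof (rule ccontr)
    assume "\<not> 1 \<le> tdeg u"
    then have t0: "tdeg u = 0" by simp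
    define c where "c = coeff (coeff u 0) 0"
    have "coeff (coeff u j) i = coeff (coeff (const2 c) j) i" for i j
    proof (cases "i = 0 \<and> j = 0")
      case True then show ?thesis by (simp add: c_def const2_def)
    next
      case False
      then have "coeff (coeff u j) i = 0" using T1[of u j i] t0 by auto
      moreover have "coeff (coeff (const2 c) j) i = 0" using False
        by (cases j; cases i) (simp_all add: const2_def)
      ultimately show ?thesis by simp
    qed
    then have "u = const2 c" by (intro poly_eqI) auto
    then show False using nc by blast
  qed
  have R0: "R \<noteq> 0"
  proof -
    obtain i j where "coeff (coeff u j) i \<noteq> 0" using T2[OF u0] by blast
    then have "coeff (coeff R i) j \<noteq> 0" by (simp add: R_def coeff_tr)
    then show ?thesis by auto
  qed
  have tRF: "tdeg R = tdeg Fu" by (rule tdeg_rows[OF rows1 rows2 R0])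
  have tF: "tdeg Fu = tdeg u" using tRF by (simp add: R_def tdeg_tr)
  have F0: "Fu \<noteq> 0" using R0 rows1 by (metis coeff_0 leading_coeff_0_iff)
  have df0: "degree f0 = 1" using al by (simp add: f0_def)
  have v0: "v \<noteq> 0" using F0 df0 by (simp add: vF pcompose_eq_0_iff)
  have part1: "biased u \<longrightarrow> tdeg u < tdeg v"
  proof
    assume b: "biased u"
    define a where "a = degx_top u"
    obtain j where j: "coeff (coeff u j) a \<noteq> 0" "a + j = tdeg u" using top_x[OF u0] a_def by blast
    have "j \<le> degy_top u" using le_degy[OF j] .
    then have ja: "j \<le> a" using b a_def by (simp add: biased_def)
    have Rj: "coeff (coeff R a) j \<noteq> 0" using j(1) by (simp add: R_def coeff_tr)
    then have Ra: "coeff R a \<noteq> 0" by auto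
    have "j \<le> degree (coeff R a)" using Rj by (rule le_degree)
    moreover have "degree (coeff R a) + a \<le> tdeg R" by (rule T1'[OF Ra])
    ultimately have topR: "degree (coeff R a) + a = tdeg u" using j(2) tRF tF by simp
    have Fa: "coeff Fu a \<noteq> 0" using Ra rows1 by simp
    have "tdeg Fu < tdeg (pcompose Fu [:p, [:\<alpha>:]:])"
      by (rule core[OF d2 al Fa]) (use topR rows2 tF j ja upos in auto)
    then show "tdeg u < tdeg v" using tF vF f0_def by simp
  qed
  have part3: "tdeg u \<le> tdeg v \<longrightarrow> biased v"
  proof (intro impI, rule ccontr)
    assume le: "tdeg u \<le> tdeg v" and nb: "\<not> biased v"
    define b where "b = degy_top v"
    obtain i where i: "coeff (coeff v b) i \<noteq> 0" "i + b = tdeg v" using top_y[OF v0] b_def by blast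
    have "i \<le> degx_top v" using le_degx[OF i] .
    then have ib: "i < b" using nb b_def by (simp add: biased_def)
    have vb: "coeff v b \<noteq> 0" using i(1) by auto
    have "i \<le> degree (coeff v b)" using i(1) by (rule le_degree)
    moreover have "degree (coeff v b) + b \<le> tdeg v" by (rule T1'[OF vb])
    ultimately have topv: "degree (coeff v b) + b = tdeg v" using i(2) by simp
    define p' where "p' = - smult (inverse \<alpha>) p"
    have dp': "degree p' \<ge> 2" using d2 al by (simp add: p'_def)
    have ial: "inverse \<alpha> \<noteq> 0" using al by simp
    have bk: "pcompose v [:p', [:inverse \<alpha>:]:] = Fu"
    proof -
      have "pcompose f0 [:p', [:inverse \<alpha>:]:] = [:0, 1:]"
        using al by (simp add: f0_def p'_def pcompose_pCons)
      then show ?thesis using pcompose_idR[of Fu] by (simp add: vF pcompose_assoc[symmetric])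
    qed
    have "tdeg v < tdeg (pcompose v [:p', [:inverse \<alpha>:]:])"
      by (rule core[OF dp' ial vb topv]) (use i ib in auto)
    then show False using bk tF le by simp
  qed
  show ?thesis using part1 part3 by simp
qed

end
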